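(* Fix an integer base $b\ge 2$ and $f_*:\{0,\dots,b-1\}\to\mathbb{Z}^{\ge 0}$ with $f_*(0)=0$, $f_*(1)=1$, $\gcd(b,f_*(b-1))=1$, and suppose there is a digit $0\le m_*\le b-1$ with $\gcd(f(m_* )-m_*,f(b-1))=1$, where $f$ is the digit map $f\left(\sum_i a_ib^i\right)=\sum_i f_*(a_i)$ (base-$b$ representation). Let $u$ be a positive integer with $f^r(u)=u$ for some $r\ge 1$. Then for each $x\in\mathbb{Z}^+$ there is a $u$-integer $l$ such that $l$ and $l+x$ are concurrently $u$-integers.
   Context: $f^r$ is the $r$-fold iterate of $f$. A positive integer $n$ is a $u$-integer if $f^r(n)=u$ for some $r\ge1$. Two positive integers $m,n$ are concurrently $u$-integers if there is some $r\ge 1$ with $f^r(m)=f^r(n)=u$. *)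

theory Defs
  imports Main
begin

text \<open>Digit map: f(sum a_i b^i) = sum fs(a_i), computed from the base-b digits
  (least significant first). Since fs 0 = 0 is assumed, leading zeros are irrelevant.\<close>
fun digit_map :: "nat \<Rightarrow> (nat \<Rightarrow> nat) \<Rightarrow> nat \<Rightarrow> nat" where
  "digit_map b fs n =
     (if n = 0 \<or> b < 2 then 0 else fs (n mod b) + digit_map b fs (n div b))"

declare digit_map.simps [simp del]

definition is_u_integer :: "(nat \<Rightarrow> nat) \<Rightarrow> nat \<Rightarrow> nat \<Rightarrow> bool" where
  "is_u_integer f u n \<longleftrightarrow> n > 0 \<and> (\<exists>r\<ge>1. (f ^^ r) n = u)"

definition concurrently_u_integers :: "(nat \<Rightarrow> nat) \<Rightarrow> nat \<Rightarrow> nat \<Rightarrow> nat \<Rightarrow> bool" where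
  "concurrently_u_integers f u m n \<longleftrightarrow>
     m > 0 \<and> n > 0 \<and> (\<exists>r\<ge>1. (f ^^ r) m = u \<and> (f ^^ r) n = u)"

end

theory Submission imports Defs "HOL-Number_Theory.Number_Theory" begin

lemma dm_step:
  assumes "b \<ge> 2" "fs 0 = 0" "d < b"
  shows "digit_map b fs (n*b + d) = fs d + digit_map b fs n"
proof (cases "n*b + d = 0")
  case True
  then have "n = 0" "d = 0" using assms by auto
  then show ?thesis using assms by (simp add: digit_map.simps)
next
  case False
  have "(n*b+d) mod b = d" "(n*b+d) div b = n" using assms by auto
  then show ?thesis using False assms by (subst digit_map.simps) auto
qed

lemma dm_zero: "digit_map b fs 0 = 0"
  by (simp add: digit_map.simps)

lemma dm_shift:
  assumes "b \<ge> 2" "fs 0 = 0"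
  shows "r < b^k \<Longrightarrow> digit_map b fs (n*b^k + r) = digit_map b fs n + digit_map b fs r"
proof (induction k arbitrary: n r)
  case 0
  then show ?case by (simp add: dm_zero)
next
  case (Suc k)
  have rd: "r div b < b^k" using Suc.prems assms
    by (simp add: div_less_iff_less_mult mult.commute)
  have "n*b^Suc k + r = (n*b^k + r div b)*b + r mod b"
    by (simp add: algebra_simps)
  then have "digit_map b fs (n*b^Suc k + r) = fs (r mod b) + digit_map b fs (n*b^k + r div b)"
    using dm_step[where b=b and fs=fs, OF assms, of "r mod b"] assms by simp
  also have "\<dots> = fs (r mod b) + digit_map b fs n + digit_map b fs (r div b)"
    using Suc.IH[OF rd] by simp
  also have "digit_map b fs r = fs (r mod b) + digit_map b fs (r div b)"
    using dm_step[where b=b and fs=fs, OF assms, of "r mod b" "r div b"] assms by simp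
  ultimately show ?case by simp
qed

lemma dm_digit:
  assumes "b \<ge> 2" "fs 0 = 0" "d < b"
  shows "digit_map b fs d = fs d"
  using dm_step[where b=b and fs=fs, OF assms, of 0] by (simp add: dm_zero)

lemma dm_pow:
  assumes "b \<ge> 2" "fs 0 = 0" "fs 1 = 1"
  shows "digit_map b fs (b^k) = 1"
  using dm_shift[where b=b and fs=fs, OF assms(1,2), of 0 k 1] assms dm_digit[where b=b and fs=fs, OF assms(1,2), of 1] by (simp add: dm_zero)

lemma dm_mult_pow:
  assumes "b \<ge> 2" "fs 0 = 0"
  shows "digit_map b fs (n*b^k) = digit_map b fs n"
  using dm_shift[where b=b and fs=fs, OF assms, of 0 k n] assms by (simp add: dm_zero)

lemma dm_allmax:
  assumes "b \<ge> 2" "fs 0 = 0"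
  shows "digit_map b fs (b^j - 1) = j * fs (b - 1)"
proof (induction j)
  case 0 then show ?case by (simp add: dm_zero)
next
  case (Suc j)
  have "b^Suc j - 1 = (b^j - 1)*b + (b - 1)"
  proof -
    have "b^j \<ge> 1" using assms by simp
    then have "b*b^j \<ge> b" by simp
    moreover have "(b^j - 1)*b = b*b^j - b" by (simp add: diff_mult_distrib2 mult.commute)
    ultimately show ?thesis using assms by simp
  qed
  then show ?case using dm_step[where b=b and fs=fs, OF assms, of "b-1" "b^j - 1"] Suc assms by simp
qed

fun rp :: "nat \<Rightarrow> nat \<Rightarrow> nat \<Rightarrow> nat \<Rightarrow> nat" where
  "rp b q d 0 = 0" | "rp b q d (Suc n) = d + b^q * rp b q d n"

lemma dm_rp:
  assumes "b \<ge> 2" "fs 0 = 0" "q \<ge> 1" "d < b"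
  shows "digit_map b fs (rp b q d n) = n * fs d"
proof (induction n)
  case 0 then show ?case by (simp add: dm_zero)
next
  case (Suc n)
  have "b \<le> b^q" using assms self_le_power[of b q] by simp
  then have "d < b^q" using assms by simp
  then have "digit_map b fs (rp b q d n * b^q + d) = n * fs d + fs d"
    using dm_shift[where b=b and fs=fs, OF assms(1,2)] Suc dm_digit[where b=b and fs=fs, OF assms(1,2,4)] by simp
  then show ?case by (simp add: mult.commute add.commute)
qed

lemma rp_cong:
  assumes "[b^q = 1] (mod F)"
  shows "[rp b q d n = n * d] (mod F)"
proof (induction n)
  case 0 then show ?case by simp
next
  case (Suc n)
  have "[d + b^q * rp b q d n = d + 1 * (n*d)] (mod F)"
    by (intro cong_add cong_mult cong_refl assms Suc)
  then show ?case by (simp add: algebra_simps)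
qed

lemma rp_pos: "n \<ge> 1 \<Longrightarrow> d \<ge> 1 \<Longrightarrow> rp b q d n \<ge> 1"
  by (cases n) auto

lemma lt_pow: "b \<ge> 2 \<Longrightarrow> n < (b::nat)^n"
  by (meson less_exp order_less_le_trans power_mono zero_le_numeral)


theorem corollary2p2:
  fixes b :: nat and fs :: "nat \<Rightarrow> nat" and m u :: nat
  assumes "b \<ge> 2"
    and "fs 0 = 0" and "fs 1 = 1"
    and "gcd b (fs (b - 1)) = 1"
    and "m \<le> b - 1"
    and "gcd (int (digit_map b fs m) - int m) (int (digit_map b fs (b - 1))) = 1"
    and "u > 0"
    and "\<exists>r\<ge>1. (digit_map b fs ^^ r) u = u"
  shows "\<forall>x>0. \<exists>l. is_u_integer (digit_map b fs) u l
            \<and> concurrently_u_integers (digit_map b fs) u l (l + x)"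
proof (intro allI impI)
  fix x :: nat assume x0: "x > 0"
  define f where "f = digit_map b fs"
  define F where "F = fs (b-1)"
  have b2: "b \<ge> 2" and fs0: "fs 0 = 0" and fs1: "fs 1 = 1" using assms by auto
  have sh: "\<And>n k r. r < b^k \<Longrightarrow> f (n*b^k + r) = f n + f r"
    unfolding f_def using dm_shift[where b=b and fs=fs, OF b2 fs0] by blast
  have dig: "\<And>d. d < b \<Longrightarrow> f d = fs d"
    unfolding f_def using dm_digit[where b=b and fs=fs, OF b2 fs0] by blast
  have pw: "\<And>k. f (b^k) = 1" unfolding f_def using dm_pow[where b=b and fs=fs, OF b2 fs0 fs1] by blast
  have mp: "\<And>n k. f (n*b^k) = f n" unfolding f_def using dm_mult_pow[where b=b and fs=fs, OF b2 fs0] by blast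
  have am: "\<And>j. f (b^j - 1) = j * F" unfolding f_def F_def using dm_allmax[where b=b and fs=fs, OF b2 fs0] by blast
  have rpf: "\<And>q d n. q \<ge> 1 \<Longrightarrow> d < b \<Longrightarrow> f (rp b q d n) = n * fs d"
    unfolding f_def using dm_rp[where b=b and fs=fs, OF b2 fs0] by blast
  have f0: "f 0 = 0" unfolding f_def by (rule dm_zero)
  have Fpos: "F > 0"
  proof (rule ccontr)
    assume "\<not> F > 0" then have "F = 0" by simp
    then have "gcd b (fs (b-1)) = b" unfolding F_def by simp
    then show False using assms(4) b2 by simp
  qed
  define P where "P = totient F"
  have P0: "P \<ge> 1" using Fpos unfolding P_def by (simp add: Suc_le_eq)
  have cbF: "coprime b F" using assms(4) unfolding F_def coprime_iff_gcd_eq_1 .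
  have bP: "[b^P = 1] (mod F)" unfolding P_def using euler_theorem[OF cbF] .
  have bPQ: "\<And>Q. [b^(P*Q) = 1] (mod F)"
    using cong_pow[OF bP] by (simp add: power_mult)
  have mb: "m < b" using assms(5) b2 by simp
  define hm :: int where "hm = int (fs m) - int m"
  have ghm: "gcd hm (int F) = 1" using assms(6) dig[OF mb] dig[of "b-1"] b2
    unfolding hm_def F_def f_def by simp
  obtain t v where tv: "t*hm + v*int F = 1" using bezout_int[of hm "int F"] ghm by auto
  define e where "e = b^x - x"
  have xlt: "x < b^x" using lt_pow[OF b2] .
  have ex: "e < b^x" "e + x = b^x" unfolding e_def using x0 xlt by auto
  define c0 :: int where "c0 = int (f e) - 1"
  define s where "s = nat ((t*c0) mod int F) + F"
  define z where "z = rp b P m s * b^P + 1"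
  have bPb: "1 < b^P" using b2 P0 by (intro one_less_power) auto
  have fz: "f z = s * fs m + 1" unfolding z_def
    using sh[OF bPb] rpf[OF P0 mb] dig[of 1] b2 fs1 by simp
  have zc: "[z = s*m + 1] (mod F)" unfolding z_def
  proof -
    have "[rp b P m s * b^P + 1 = (s*m)*1 + 1] (mod F)"
      by (intro cong_add cong_mult rp_cong bP cong_refl)
    then show "[rp b P m s * b^P + 1 = s*m + 1] (mod F)" by simp
  qed
  define Q where "Q = z + f e + 1"
  define S where "S = rp b P 1 (f z) * b^(P*Q)"
  have fS: "f S = f z" unfolding S_def using mp rpf[OF P0, of 1] b2 fs1 by simp
  have Sc: "[S = f z] (mod F)" unfolding S_def
  proof -
    have "[rp b P 1 (f z) * b^(P*Q) = (f z * 1) * 1] (mod F)"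
      by (intro cong_mult rp_cong bP bPQ)
    then show "[rp b P 1 (f z) * b^(P*Q) = f z] (mod F)" by simp
  qed
  have SQ: "S > Q"
  proof -
    have "rp b P 1 (f z) \<ge> 1" using fz by (intro rp_pos) auto
    moreover have "b^(P*Q) > Q"
    proof -
      have "Q \<le> P*Q" using P0 by simp
      also have "P*Q < b^(P*Q)" using lt_pow[OF b2] .
      finally show ?thesis .
    qed
    ultimately show ?thesis unfolding S_def
      by (metis less_le_trans mult_1 mult_le_mono1)
  qed
  define Dd where "Dd = S - z"
  have zS: "z < S" using SQ unfolding Q_def by simp
  have Ddgt: "Dd > f e + 1" using SQ unfolding Dd_def Q_def by simp
  have dv: "int F dvd (int Dd - c0)"
  proof -
    have c1: "[int S = int (f z)] (mod int F)" using Sc cong_int_iff by blast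
    have c2: "[int z = int (s*m + 1)] (mod int F)" using zc cong_int_iff by blast
    have "[int S - int z = int (f z) - int (s*m+1)] (mod int F)"
      by (rule cong_diff[OF c1 c2])
    moreover have "int Dd = int S - int z" unfolding Dd_def using zS by simp
    moreover have "int (f z) - int (s*m+1) = int s * hm"
      unfolding fz hm_def by (simp add: algebra_simps)
    ultimately have c3: "[int Dd = int s * hm] (mod int F)" by simp
    have c4: "[int s = t*c0] (mod int F)"
    proof -
      have "int s = (t*c0) mod int F + int F" unfolding s_def using Fpos by simp
      then show ?thesis unfolding cong_def by simp
    qed
    have c5: "[int s * hm = t*c0*hm] (mod int F)" by (intro cong_mult c4 cong_refl)
    have "t*c0*hm - c0 = int F * (- c0 * v)"
    proof -
      have "t*c0*hm - c0 = c0*(t*hm - 1)" by (simp add: algebra_simps)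
      also have "t*hm - 1 = - v * int F" using tv by (simp add: algebra_simps)
      finally show ?thesis by (simp add: algebra_simps)
    qed
    then have c6: "[t*c0*hm = c0] (mod int F)" unfolding cong_iff_dvd_diff by simp
    have "[int Dd = c0] (mod int F)" using cong_trans[OF c3 cong_trans[OF c5 c6]] .
    then show ?thesis unfolding cong_iff_dvd_diff .
  qed
  then obtain J where J: "int Dd - c0 = int F * J" by (auto simp: dvd_def)
  have "int Dd - c0 > 0" using Ddgt unfolding c0_def by simp
  then have Jpos: "J > 0" using J Fpos by (simp add: zero_less_mult_iff)
  define j where "j = nat J"
  have jeq: "Dd + 1 = j*F + f e"
  proof -
    have "int Dd - (int (f e) - 1) = int F * int j" using J Jpos unfolding j_def c0_def by simp
    then have "int (Dd + 1) = int (j*F + f e)" by (simp add: algebra_simps)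
    then show ?thesis by linarith
  qed
  define y1 where "y1 = (b^j - 1)*b^x + e"
  have fy1: "f y1 = j*F + f e" unfolding y1_def using sh[OF ex(1)] am by simp
  have y1x: "y1 + x = b^(x+j)"
  proof -
    have "b^j \<ge> 1" using b2 by simp
    then have "(b^j - 1)*b^x + b^x = b^j * b^x" by (simp add: diff_mult_distrib)
    then show ?thesis unfolding y1_def using ex(2) by (simp add: power_add mult.commute add.assoc)
  qed
  define W where "W = rp b 1 1 u * b^(f z)"
  have fW: "f W = u" unfolding W_def using mp rpf[of 1 1 u] b2 fs1 by simp
  have Wge: "W \<ge> f z"
  proof -
    have "rp b 1 1 u \<ge> 1" using assms(7) by (intro rp_pos) auto
    moreover have "f z < b^(f z)" using lt_pow[OF b2] .
    ultimately show ?thesis unfolding W_def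
      by (metis less_imp_le_nat mult_1 mult_le_mono1 order_trans)
  qed
  define T where "T = S + 1"
  have ST: "S < b^T" "z < b^T" using lt_pow[OF b2, of T] zS unfolding T_def by auto
  define Pad where "Pad = rp b 1 1 (W - f z)"
  have fPad: "f Pad = W - f z" unfolding Pad_def using rpf[of 1 1] b2 fs1 by simp
  define y where "y = Pad*b^T + z"
  define y' where "y' = Pad*b^T + S"
  have fy: "f y = W" unfolding y_def using sh[OF ST(2)] fPad Wge by simp
  have fy': "f y' = W" unfolding y'_def using sh[OF ST(1)] fPad Wge fS by simp
  have yy': "y' = y + Dd" unfolding y_def y'_def Dd_def using zS by simp
  have y1: "y \<ge> 1" unfolding y_def z_def by simp
  define H where "H = rp b 1 1 (y - 1)"
  have fH: "f H = y - 1" unfolding H_def using rpf[of 1 1] b2 fs1 by simp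
  define A where "A = x + j + 1"
  have bA: "b^(x+j) < b^A" unfolding A_def using b2 by (simp add: power_strict_increasing_iff)
  have y1A: "y1 < b^A" using y1x bA x0 by linarith
  define l where "l = H*b^A + y1"
  have fl: "f l = y'" unfolding l_def using sh[OF y1A] fH fy1 jeq yy' y1 by simp
  have fl': "f (l + x) = y"
  proof -
    have "l + x = H*b^A + b^(x+j)" unfolding l_def using y1x by simp
    then show ?thesis using sh[OF bA] fH pw y1 by simp
  qed
  have l3: "(f ^^ 3) l = u" using fl fy' fW by (simp add: numeral_3_eq_3)
  have lx3: "(f ^^ 3) (l + x) = u" using fl' fy fW by (simp add: numeral_3_eq_3)
  have lpos: "l > 0"
  proof (rule ccontr)
    assume "\<not> l > 0" then have "l = 0" by simp
    then have "f l = 0" using f0 by simp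
    then show False using fl yy' y1 by simp
  qed
  show "\<exists>l. is_u_integer (digit_map b fs) u l
            \<and> concurrently_u_integers (digit_map b fs) u l (l + x)"
    unfolding is_u_integer_def concurrently_u_integers_def f_def[symmetric]
    using l3 lx3 lpos by (intro exI[of _ l]) (auto intro!: exI[of _ 3])
qed

end
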